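(* Let $(F_n)_{n\ge1}$ be the Fibonacci sequence ($F_1=F_2=1$, $F_{n+2}=F_{n+1}+F_n$). For a positive integer $n$ let $z(n)$ be the smallest positive integer $k$ such that $n\mid F_k$, and let $\ell(n):=\operatorname{lcm}(n,z(n))$. Let $\varphi$ denote Euler's totient function. Then there is an absolute constant $C>0$ such that for all real $y>0$, $$\sum_{q>y,\ q \text{ prime}} \frac{1}{\varphi(\ell(q))}\le \frac{C}{y^{1/4}}.$$ *)

theory Defs
  imports "HOL-Analysis.Analysis" "HOL-Number_Theory.Number_Theory"
begin

text \<open>Rank of apparition: smallest positive k with n dividing F_k (fib from HOL-Number_Theory.Fib,
  fib 0 = 0, fib 1 = fib 2 = 1).\<close>
definition zfib :: "nat \<Rightarrow> nat" where
  "zfib n = (LEAST k. 0 < k \<and> n dvd fib k)"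

definition ellfib :: "nat \<Rightarrow> nat" where
  "ellfib n = lcm n (zfib n)"

end

theory Submission
  imports Defs
begin


lemma fib_binom_real:
  "(2::real)^n * real (fib n) = 2 * real (\<Sum>k\<le>n. if odd k then (n choose k) * 5^(k div 2) else 0)"
proof -
  define s :: real where "s = sqrt 5"
  have s5: "s^2 = 5" unfolding s_def by simp
  have spos: "s > 0" unfolding s_def by simp
  have cf: "real (fib n) = (((1+s)/2)^n - ((1-s)/2)^n) / s"
    unfolding s_def by (rule fib_closed_form)
  have pw: "\<And>k. s^k = (if odd k then 5^(k div 2) * s else 5^(k div 2))"
  proof -
    fix k :: nat
    have "(s^2)^(k div 2) * s^(k mod 2) = s^k"
      by (simp only: power_mult[symmetric] power_add[symmetric] mult_div_mod_eq)
    then show "s^k = (if odd k then 5^(k div 2) * s else 5^(k div 2))"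
      using s5 by (auto simp: odd_iff_mod_2_eq_one)
  qed
  have b1: "(s+1)^n = (\<Sum>k\<le>n. real (n choose k) * s^k)"
    by (simp add: binomial_ring)
  have b2: "(-s+1)^n = (\<Sum>k\<le>n. real (n choose k) * (-s)^k)"
    using binomial_ring[of "-s" "1::real" n] by (simp add: mult.commute)
  have "(1+s)^n - (1-s)^n = (\<Sum>k\<le>n. real (n choose k) * (s^k - (-s)^k))"
    using b1 b2 by (simp add: sum_subtractf right_diff_distrib add.commute)
  also have "\<dots> = (\<Sum>k\<le>n. 2 * s * (if odd k then real (n choose k) * 5^(k div 2) else 0))"
    by (intro sum.cong refl) (auto simp: pw power_minus_odd)
  also have "\<dots> = 2 * s * real (\<Sum>k\<le>n. if odd k then (n choose k) * 5^(k div 2) else 0)"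
    unfolding of_nat_sum sum_distrib_left by (intro sum.cong refl) auto
  finally have d: "(1+s)^n - (1-s)^n = 2 * s * real (\<Sum>k\<le>n. if odd k then (n choose k) * 5^(k div 2) else 0)" .
  have "(2::real)^n * real (fib n) = ((1+s)^n - (1-s)^n) / s"
    unfolding cf using spos by (simp add: power_divide field_simps)
  with d spos show ?thesis by simp
qed

lemma fib_binom:
  "2^n * fib n = 2 * (\<Sum>k\<le>n. if odd k then (n choose k) * 5^(k div 2) else 0)"
proof -
  have "real (2^n * fib n) = real (2 * (\<Sum>k\<le>n. if odd k then (n choose k) * 5^(k div 2) else 0))"
    using fib_binom_real[of n] by simp
  then show ?thesis by (simp only: of_nat_eq_iff)
qed

lemma fib_prime_cong:
  assumes q: "prime q" "q \<noteq> 2"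
  shows "[fib q = 5^(q div 2)] (mod q)"
proof -
  have q1: "q > 1" using q(1) prime_gt_1_nat by blast
  have oq: "odd q" using prime_odd_nat[OF q(1)] q1 q(2) by simp
  define g where "g = (\<lambda>k. if odd k then (q choose k) * 5^(k div 2) else (0::nat))"
  have "q dvd (\<Sum>k<q. g k)"
  proof (rule dvd_sum)
    fix k assume "k \<in> {..<q}"
    then show "q dvd g k" unfolding g_def using dvd_choose_prime[of k q] q1 q
      by (cases "k = 0") auto
  qed
  moreover have "(\<Sum>k\<le>q. g k) = (\<Sum>k<q. g k) + 5^(q div 2)"
    using oq by (simp add: lessThan_Suc_atMost[symmetric] g_def)
  ultimately have S: "[(\<Sum>k\<le>q. g k) = 5^(q div 2)] (mod q)"
    using cong_add_rcancel_0_nat[of "\<Sum>k<q. g k" "5^(q div 2)" q] cong_0_iff[of "\<Sum>k<q. g k" q]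
    by simp
  have B: "2^q * fib q = 2 * (\<Sum>k\<le>q. g k)" unfolding g_def by (rule fib_binom)
  have nd2: "\<not> q dvd 2"
  proof
    assume "q dvd 2"
    then have "q \<le> 2" by (simp add: dvd_imp_le)
    with q1 have "q = 2" by simp
    with oq show False by simp
  qed
  have F: "[2^(q-1) = 1] (mod q)" using fermat_theorem[OF q(1) nd2] .
  obtain r where r: "q = Suc r" using q1 by (cases q) auto
  have "(2::nat)^q = 2 * 2^(q-1)" unfolding r by simp
  then have F2: "[(2::nat)^q = 2] (mod q)" using cong_scalar_left[OF F, of 2] by simp
  have "[2 * fib q = 2^q * fib q] (mod q)" using cong_scalar_right[OF F2, of "fib q"] by (simp add: cong_sym)
  also have "2^q * fib q = 2 * (\<Sum>k\<le>q. g k)" by (rule B)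
  also have "[2 * (\<Sum>k\<le>q. g k) = 2 * 5^(q div 2)] (mod q)" using cong_scalar_left[OF S] .
  finally have "[2 * fib q = 2 * 5^(q div 2)] (mod q)" .
  moreover have "coprime 2 q" using oq by simp
  ultimately show ?thesis using cong_mult_lcancel_nat by blast
qed

lemma prime_dvd_fib_pm:
  assumes q: "prime q" "q \<noteq> 2" "q \<noteq> 5"
  shows "q dvd fib (q-1) \<or> q dvd fib (q+1)"
proof -
  have q1: "q > 1" using q(1) prime_gt_1_nat by blast
  have oq: "odd q" using prime_odd_nat[OF q(1)] q1 q(2) by simp
  have "[fib q ^ 2 = (5^(q div 2))^2] (mod q)" using cong_pow[OF fib_prime_cong[OF q(1,2)]] .
  moreover have "((5::nat)^(q div 2)) ^ 2 = 5^(2 * (q div 2))"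
    by (simp add: power_mult[symmetric] mult.commute)
  moreover have "2 * (q div 2) = q - 1" using oq by simp
  moreover have "\<not> q dvd 5"
  proof
    assume "q dvd 5"
    then have "q \<le> 5" by (simp add: dvd_imp_le)
    then have "q \<in> {2,3,4,5}" using q1 by auto
    then show False using \<open>q dvd 5\<close> q by auto
  qed
  then have "[5^(q-1) = 1] (mod q)" using fermat_theorem[OF q(1)] by blast
  ultimately have c: "[fib q ^ 2 = 1] (mod q)" using cong_trans by metis
  have fpos: "fib q ^ 2 \<ge> 1" using fib_neq_0_nat[of q] q1 by simp
  have d: "q dvd fib q ^ 2 - 1" using c fpos cong_altdef_nat by blast
  have "fib (Suc (Suc (q-1))) * fib (q-1) = fib (Suc (q-1))^2 - 1"
    using fib_Cassini_nat[of "q-1"] oq q1 by simp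
  then have "fib (q+1) * fib (q-1) = fib q ^ 2 - 1" using q1 by (simp add: Suc_diff_1)
  with d have "q dvd fib (q+1) * fib (q-1)" by simp
  then show ?thesis using q(1) prime_dvd_mult_iff by blast
qed



lemma prod_pf_le:
  assumes "n > (0::nat)"
  shows "(\<Prod>p\<in>prime_factors n. p) \<le> n"
proof -
  have "(\<Prod>p\<in>prime_factors n. p) \<le> (\<Prod>p\<in>prime_factors n. p ^ multiplicity p n)"
  proof (rule prod_mono)
    fix p assume p: "p \<in> prime_factors n"
    then have "multiplicity p n > 0" "p > 0" using prime_factors_multiplicity prime_gt_0_nat
      by auto
    then show "0 \<le> p \<and> p \<le> p ^ multiplicity p n"
      by (simp add: self_le_power)
  qed
  also have "\<dots> = n" using prime_factorization_nat[OF assms] by simp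
  finally show ?thesis .
qed

lemma card_pf_le:
  assumes "n > (0::nat)"
  shows "2 ^ card (prime_factors n) \<le> n"
proof -
  have "(2::nat) ^ card (prime_factors n) = (\<Prod>p\<in>prime_factors n. 2)" by simp
  also have "\<dots> \<le> (\<Prod>p\<in>prime_factors n. p)"
    by (rule prod_mono) (auto intro: prime_ge_2_nat)
  also have "\<dots> \<le> n" by (rule prod_pf_le[OF assms])
  finally show ?thesis .
qed

lemma fib_le_pow2: "fib n \<le> 2 ^ n"
proof (induction n rule: fib.induct)
  case (3 n)
  have "fib (Suc (Suc n)) = fib (Suc n) + fib n" by simp
  also have "\<dots> \<le> 2 ^ Suc n + 2 ^ n" using 3 by simp
  also have "\<dots> \<le> 2 ^ Suc (Suc n)" by simp
  finally show ?case .
qed auto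

lemma zfib_dvd:
  assumes "q dvd fib n" "n > 0"
  shows "0 < zfib q \<and> q dvd fib (zfib q) \<and> zfib q dvd n"
proof -
  let ?P = "\<lambda>k. 0 < k \<and> q dvd fib k"
  have ex: "?P n" using assms by simp
  have P: "?P (zfib q)" unfolding zfib_def by (rule LeastI[of ?P n, OF ex])
  have min: "\<And>k. ?P k \<Longrightarrow> zfib q \<le> k" unfolding zfib_def by (rule Least_le)
  define g where "g = gcd (zfib q) n"
  have gpos: "g > 0" using assms(2) by (simp add: g_def)
  have "q dvd gcd (fib (zfib q)) (fib n)" using P assms(1) by simp
  then have "q dvd fib g" unfolding g_def by (simp add: fib_gcd)
  then have "zfib q \<le> g" using min gpos by blast
  moreover have "g \<le> zfib q" unfolding g_def using P by (simp add: dvd_imp_le)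
  ultimately have "g = zfib q" by simp
  then have "zfib q dvd n" unfolding g_def by (metis gcd_dvd2)
  with P show ?thesis by simp
qed

lemma zfib_good:
  assumes q: "prime q" "q \<noteq> 2" "q \<noteq> 5"
  shows "0 < zfib q \<and> q dvd fib (zfib q) \<and> zfib q \<le> q + 1 \<and>
         totient (ellfib q) = (q - 1) * totient (zfib q)"
proof -
  have q1: "q > 1" using q(1) prime_gt_1_nat by blast
  obtain n where n: "q dvd fib n" "n > 0" "n = q - 1 \<or> n = q + 1"
  proof (cases "q dvd fib (q-1)")
    case True
    show ?thesis by (rule that[of "q-1"]) (use True q1 in auto)
  next
    case False
    then have "q dvd fib (q+1)" using prime_dvd_fib_pm[OF q] by blast
    show ?thesis by (rule that[of "q+1"]) (use \<open>q dvd fib (q+1)\<close> in auto)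
  qed
  from zfib_dvd[OF n(1,2)] have z: "0 < zfib q" "q dvd fib (zfib q)" "zfib q dvd n" by auto
  have zle: "zfib q \<le> q + 1" using dvd_imp_le[OF z(3) n(2)] n(3) by auto
  have "\<not> q dvd zfib q"
  proof
    assume "q dvd zfib q"
    then have qn: "q dvd n" using z(3) dvd_trans by blast
    show False using n(3)
    proof
      assume "n = q - 1"
      then show False using qn n(2) dvd_imp_le[OF qn n(2)] by simp
    next
      assume "n = q + 1"
      then have "q dvd q + 1" using qn by simp
      then have "q dvd 1" using dvd_add_right_iff[of q q 1] by simp
      then show False using q1 by simp
    qed
  qed
  then have cop: "coprime q (zfib q)" using prime_imp_coprime[OF q(1)] by blast
  have "ellfib q = q * zfib q" unfolding ellfib_def using lcm_coprime[OF cop] by simp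
  then have "totient (ellfib q) = (q - 1) * totient (zfib q)"
    using totient_mult_coprime[OF cop] totient_prime[OF q(1)] by simp
  with z zle show ?thesis by simp
qed

lemma card_zfib_le:
  assumes "m > 0"
  shows "finite {q. prime q \<and> q \<noteq> 2 \<and> q \<noteq> 5 \<and> zfib q = m} \<and>
         card {q. prime q \<and> q \<noteq> 2 \<and> q \<noteq> 5 \<and> zfib q = m} \<le> m"
proof -
  have fpos: "fib m > 0" using assms by (rule fib_neq_0_nat)
  have sub: "{q. prime q \<and> q \<noteq> 2 \<and> q \<noteq> 5 \<and> zfib q = m} \<subseteq> prime_factors (fib m)"
    using zfib_good fpos by (auto simp: prime_factors_dvd)
  have fin: "finite (prime_factors (fib m))" by simp
  have "2 ^ card (prime_factors (fib m)) \<le> fib m" by (rule card_pf_le[OF fpos])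
  also have "\<dots> \<le> 2 ^ m" by (rule fib_le_pow2)
  finally have "card (prime_factors (fib m)) \<le> m" by simp
  moreover have "card {q. prime q \<and> q \<noteq> 2 \<and> q \<noteq> 5 \<and> zfib q = m} \<le> card (prime_factors (fib m))"
    by (rule card_mono[OF fin sub])
  ultimately show ?thesis using finite_subset[OF sub fin] by simp
qed



lemma g_ge_half:
  assumes "prime (p::nat)"
  shows "(1 - 1 / real p) * real p powr (1/3) \<ge> 1/2"
proof -
  have p2: "real p \<ge> 2" using prime_ge_2_nat[OF assms] by simp
  have "1 - 1 / real p \<ge> 1/2" using p2 by (simp add: field_simps)
  moreover have "real p powr (1/3) \<ge> 1" using p2 by (simp add: ge_one_powr_ge_zero)
  ultimately have "(1/2::real) * 1 \<le> (1 - 1 / real p) * real p powr (1/3)"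
    by (intro mult_mono) auto
  then show ?thesis by simp
qed

lemma g_ge_one:
  assumes "(p::nat) \<ge> 4"
  shows "(1 - 1 / real p) * real p powr (1/3) \<ge> 1"
proof -
  have p4: "real p \<ge> 4" using assms by simp
  have a: "1 - 1 / real p \<ge> 3/4" using p4 by (simp add: field_simps)
  have t3: "(real p powr (1/3)) ^ 3 = real p"
    using powr_power[of "real p" "1/3" 3] p4 by simp
  have b: "real p powr (1/3) \<ge> 4/3"
  proof (rule ccontr)
    assume "\<not> real p powr (1/3) \<ge> 4/3"
    then have "(real p powr (1/3)) ^ 3 < (4/3) ^ 3"
      by (intro power_strict_mono) auto
    then show False using t3 p4 by (simp add: power_divide)
  qed
  have "(3/4::real) * (4/3) \<le> (1 - 1 / real p) * real p powr (1/3)"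
    by (rule mult_mono) (use a b in auto)
  then show ?thesis by simp
qed

lemma totient_lb:
  assumes mpos: "m > (0::nat)"
  shows "real m powr (2/3) / 4 \<le> real (totient m)"
proof -
  define P where "P = prime_factors m"
  define g where "g = (\<lambda>p::nat. (1 - 1 / real p) * real p powr (1/3))"
  have finP: "finite P" unfolding P_def by simp
  have primeP: "\<And>p. p \<in> P \<Longrightarrow> prime p" unfolding P_def by auto
  define A where "A = P \<inter> {2,3}"
  define B where "B = P - {2,3}"
  have PAB: "P = A \<union> B" "A \<inter> B = {}" unfolding A_def B_def by auto
  have finA: "finite A" and finB: "finite B" using finP unfolding A_def B_def by auto
  have gB: "(\<Prod>p\<in>B. g p) \<ge> 1"
  proof (rule prod_ge_1)
    fix p assume "p \<in> B"
    then have "prime p" "p \<noteq> 2" "p \<noteq> 3" using primeP unfolding B_def by auto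
    moreover have "p \<noteq> 4"
    proof
      assume "p = 4"
      with \<open>prime p\<close> have "prime (2 * 2 :: nat)" by simp
      then show False by (simp add: prime_product)
    qed
    ultimately have "p \<ge> 4" using prime_ge_2_nat[of p] by linarith
    then show "1 \<le> g p" unfolding g_def by (rule g_ge_one)
  qed
  have cardA: "card A \<le> 2"
  proof -
    have "card A \<le> card {2::nat,3}" by (rule card_mono) (auto simp: A_def)
    then show ?thesis by simp
  qed
  have "(\<Prod>p\<in>A. g p) \<ge> (\<Prod>p\<in>A. 1/2)"
    by (rule prod_mono) (use primeP g_ge_half in \<open>auto simp: A_def g_def\<close>)
  moreover have "(\<Prod>p\<in>A. (1/2::real)) = (1/2)^card A" by simp
  moreover have "(1/2::real)^card A \<ge> (1/2)^2"
    by (rule power_decreasing) (use cardA in auto)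
  ultimately have gA: "(\<Prod>p\<in>A. g p) \<ge> 1/4" by (simp add: power2_eq_square)
  have gApos: "(\<Prod>p\<in>A. g p) \<ge> 0" using gA by linarith
  have "(\<Prod>p\<in>P. g p) = (\<Prod>p\<in>A. g p) * (\<Prod>p\<in>B. g p)"
    unfolding PAB(1) by (rule prod.union_disjoint[OF finA finB PAB(2)])
  also have "\<dots> \<ge> (1/4) * 1" by (rule mult_mono) (use gA gB gApos in auto)
  finally have gP: "(\<Prod>p\<in>P. g p) \<ge> 1/4" by simp
  define X where "X = real (\<Prod>p\<in>P. p)"
  have "(\<Prod>p\<in>P. p) > 0" using primeP prime_gt_0_nat by (simp add: prod_pos)
  then have X1: "X \<ge> 1" unfolding X_def by linarith
  have "(\<Prod>p\<in>P. p) \<le> m" unfolding P_def using prod_pf_le[OF mpos] by simp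
  then have Xm: "X \<le> real m" by (simp only: X_def of_nat_le_iff)
  have "(\<Prod>p\<in>P. g p) = (\<Prod>p\<in>P. 1 - 1 / real p) * (\<Prod>p\<in>P. real p powr (1/3))"
    unfolding g_def by (rule prod.distrib)
  also have "(\<Prod>p\<in>P. real p powr (1/3)) = X powr (1/3)"
    unfolding X_def of_nat_prod by (rule prod_powr_distrib[symmetric])
  finally have eq: "(\<Prod>p\<in>P. g p) = (\<Prod>p\<in>P. 1 - 1 / real p) * X powr (1/3)" .
  have Xpos: "X powr (1/3) > 0" using X1 by simp
  have "X powr (1/3) \<le> real m powr (1/3)" by (rule powr_mono2) (use X1 Xm in auto)
  have Q: "(\<Prod>p\<in>P. 1 - 1 / real p) = (\<Prod>p\<in>P. g p) / X powr (1/3)"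
    using eq Xpos by (simp add: field_simps)
  have mp: "real m powr (1/3) > 0" using mpos by simp
  have "(1/4) / real m powr (1/3) \<le> (\<Prod>p\<in>P. g p) / X powr (1/3)"
    by (rule frac_le) (use gP Xpos \<open>X powr (1/3) \<le> real m powr (1/3)\<close> in auto)
  then have L: "(1/4) / real m powr (1/3) \<le> (\<Prod>p\<in>P. 1 - 1 / real p)" using Q by simp
  have "real (totient m) = real m * (\<Prod>p\<in>P. 1 - 1 / real p)"
    unfolding P_def by (rule totient_formula2)
  also have "\<dots> \<ge> real m * ((1/4) / real m powr (1/3))"
    by (rule mult_left_mono[OF L]) simp
  finally have T: "real (totient m) \<ge> real m * ((1/4) / real m powr (1/3))" .
  have "real m * ((1/4) / real m powr (1/3)) = (real m powr 1 / real m powr (1/3)) / 4"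
    using mpos by simp
  also have "\<dots> = real m powr (2/3) / 4"
    by (subst powr_diff[symmetric]) (use mpos in auto)
  finally show ?thesis using T by simp
qed



definition hh :: "nat \<Rightarrow> real" where
  "hh q = real q powr (1/4) * (1 / real (totient (ellfib q)))"

lemma hh_nonneg: "hh q \<ge> 0" unfolding hh_def by simp

lemma hq_bound:
  assumes q: "prime q" "q \<noteq> 2" "q \<noteq> 5"
  shows "hh q \<le> 8 * (real q powr (-3/4) * real (zfib q) powr (-2/3))"
proof -
  from zfib_good[OF q] have zpos: "0 < zfib q" and T: "totient (ellfib q) = (q - 1) * totient (zfib q)"
    by auto
  have q2: "q \<ge> 2" using prime_ge_2_nat[OF q(1)] .
  define a where "a = real q"
  define z where "z = real (zfib q)"
  have a2: "a \<ge> 2" unfolding a_def using q2 by simp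
  have z1: "z \<ge> 1" unfolding z_def using zpos by simp
  have phi: "real (totient (zfib q)) \<ge> z powr (2/3) / 4" unfolding z_def by (rule totient_lb[OF zpos])
  have zp: "z powr (2/3) > 0" using z1 by simp
  have RT: "real (totient (ellfib q)) = (a - 1) * real (totient (zfib q))"
    unfolding T a_def using q2 by (simp add: of_nat_diff)
  have "(a / 2) * (z powr (2/3) / 4) \<le> (a - 1) * real (totient (zfib q))"
    by (rule mult_mono) (use a2 phi zp in auto)
  then have Tlb: "a * z powr (2/3) / 8 \<le> real (totient (ellfib q))" using RT by simp
  have Dpos: "a * z powr (2/3) / 8 > 0" using a2 zp by simp
  have "hh q = a powr (1/4) / real (totient (ellfib q))" unfolding hh_def a_def by simp
  also have "\<dots> \<le> a powr (1/4) / (a * z powr (2/3) / 8)"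
  proof (rule divide_left_mono)
    show "a * z powr (2/3) / 8 \<le> real (totient (ellfib q))" by (rule Tlb)
    show "0 \<le> a powr (1/4)" by simp
    have "real (totient (ellfib q)) > 0" using Tlb Dpos by linarith
    then show "0 < real (totient (ellfib q)) * (a * z powr (2/3) / 8)" using Dpos by simp
  qed
  also have "\<dots> = 8 * ((a powr (1/4) / a) * (1 / z powr (2/3)))" by simp
  also have "a powr (1/4) / a = a powr (-3/4)"
  proof -
    have "a powr (1/4 - 1) = a powr (1/4) / a powr 1" by (rule powr_diff)
    then show ?thesis using a2 by simp
  qed
  also have "1 / z powr (2/3) = z powr (-2/3)" by (simp add: powr_minus_divide)
  finally show ?thesis unfolding a_def z_def .
qed

lemma sq_powr: "x > 0 \<Longrightarrow> (x^2) powr c = x powr (2 * c)" for x :: real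
  by (simp add: powr_powr[symmetric])

lemma hq_bound_B:
  assumes q: "prime q" "q \<noteq> 2" "q \<noteq> 5" and lt: "real q < real (zfib q) ^ 2"
  shows "hh q \<le> 8 * real q powr (-13/12)"
proof -
  have zpos: "0 < zfib q" using zfib_good[OF q] by auto
  have qpos: "real q > 0" using prime_gt_0_nat[OF q(1)] by simp
  have zr: "real (zfib q) > 0" using zpos by simp
  have "real (zfib q) powr (-2/3) = (real (zfib q) ^ 2) powr (-1/3)"
    using sq_powr[OF zr, of "-1/3"] by simp
  also have "\<dots> \<le> real q powr (-1/3)"
    by (rule powr_mono2') (use qpos lt in auto)
  finally have zb: "real (zfib q) powr (-2/3) \<le> real q powr (-1/3)" .
  have "hh q \<le> 8 * (real q powr (-3/4) * real (zfib q) powr (-2/3))" by (rule hq_bound[OF q])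
  also have "\<dots> \<le> 8 * (real q powr (-3/4) * real q powr (-1/3))"
    by (intro mult_left_mono zb) auto
  also have "real q powr (-3/4) * real q powr (-1/3) = real q powr (-13/12)"
    by (simp add: powr_add[symmetric])
  finally show ?thesis .
qed

lemma hq_bound_A:
  assumes q: "prime q" "q \<noteq> 2" "q \<noteq> 5" and le: "real (zfib q) ^ 2 \<le> real q"
  shows "hh q \<le> 8 * real (zfib q) powr (-13/6)"
proof -
  have zpos: "0 < zfib q" using zfib_good[OF q] by auto
  have zr: "real (zfib q) > 0" using zpos by simp
  have "real q powr (-3/4) \<le> (real (zfib q) ^ 2) powr (-3/4)"
    by (rule powr_mono2') (use zr le in auto)
  also have "\<dots> = real (zfib q) powr (-3/2)"
    using sq_powr[OF zr, of "-3/4"] by simp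
  finally have qb: "real q powr (-3/4) \<le> real (zfib q) powr (-3/2)" .
  have "hh q \<le> 8 * (real q powr (-3/4) * real (zfib q) powr (-2/3))" by (rule hq_bound[OF q])
  also have "\<dots> \<le> 8 * (real (zfib q) powr (-3/2) * real (zfib q) powr (-2/3))"
    by (intro mult_left_mono mult_right_mono qb) auto
  also have "real (zfib q) powr (-3/2) * real (zfib q) powr (-2/3) = real (zfib q) powr (-13/6)"
    by (simp add: powr_add[symmetric])
  finally show ?thesis .
qed



lemma hh_finite_bound:
  assumes F: "finite F" "F \<subseteq> {q. prime q}"
  shows "sum hh F \<le> hh 2 + hh 5 + 8 * (\<Sum>n. real n powr (-13/12)) + 8 * (\<Sum>n. real n powr (-7/6))"
proof -
  have s1: "summable (\<lambda>n. real n powr (-13/12))" by (simp add: summable_real_powr_iff)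
  have s2: "summable (\<lambda>n. real n powr (-7/6))" by (simp add: summable_real_powr_iff)
  define F2 where "F2 = F - {2,5}"
  define FB where "FB = {q\<in>F2. real q < real (zfib q) ^ 2}"
  define FA where "FA = F2 - FB"
  have finF2: "finite F2" using F unfolding F2_def by simp
  have finFB: "finite FB" using finF2 unfolding FB_def by simp
  have finFA: "finite FA" using finF2 unfolding FA_def by simp
  have F2q: "\<And>q. q \<in> F2 \<Longrightarrow> prime q \<and> q \<noteq> 2 \<and> q \<noteq> 5" using F unfolding F2_def by auto
  have "sum hh F = sum hh (F - (F \<inter> {2,5})) + sum hh (F \<inter> {2,5})"
    by (rule sum.subset_diff) (use F in auto)
  also have "F - (F \<inter> {2,5}) = F2" unfolding F2_def by auto
  also have "sum hh (F \<inter> {2,5}) \<le> sum hh {2,5}"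
    by (rule sum_mono2) (auto simp: hh_nonneg)
  also have "sum hh {2,5} = hh 2 + hh 5" by simp
  finally have S0: "sum hh F \<le> sum hh F2 + (hh 2 + hh 5)" by simp
  have "sum hh F2 = sum hh (F2 - FB) + sum hh FB"
    by (rule sum.subset_diff) (use finF2 in \<open>auto simp: FB_def\<close>)
  then have S2: "sum hh F2 = sum hh FA + sum hh FB" unfolding FA_def by simp
  have "sum hh FB \<le> (\<Sum>q\<in>FB. 8 * real q powr (-13/12))"
  proof (rule sum_mono)
    fix q assume "q \<in> FB"
    then have "prime q" "q \<noteq> 2" "q \<noteq> 5" "real q < real (zfib q) ^ 2"
      using F2q unfolding FB_def by auto
    then show "hh q \<le> 8 * real q powr (-13/12)" by (rule hq_bound_B)
  qed
  also have "\<dots> = 8 * (\<Sum>q\<in>FB. real q powr (-13/12))" by (simp add: sum_distrib_left)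
  also have "(\<Sum>q\<in>FB. real q powr (-13/12)) \<le> (\<Sum>n. real n powr (-13/12))"
    by (rule sum_le_suminf[OF s1 finFB]) simp
  finally have SB: "sum hh FB \<le> 8 * (\<Sum>n. real n powr (-13/12))" by simp
  have "sum hh FA \<le> (\<Sum>q\<in>FA. 8 * real (zfib q) powr (-13/6))"
  proof (rule sum_mono)
    fix q assume "q \<in> FA"
    then have "prime q" "q \<noteq> 2" "q \<noteq> 5" "real (zfib q) ^ 2 \<le> real q"
      using F2q unfolding FA_def FB_def by auto
    then show "hh q \<le> 8 * real (zfib q) powr (-13/6)" by (rule hq_bound_A)
  qed
  also have "\<dots> = (\<Sum>m\<in>zfib ` FA. \<Sum>q\<in>{q\<in>FA. zfib q = m}. 8 * real (zfib q) powr (-13/6))"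
    by (rule sum.image_gen[OF finFA])
  also have "\<dots> = (\<Sum>m\<in>zfib ` FA. real (card {q\<in>FA. zfib q = m}) * (8 * real m powr (-13/6)))"
  proof (rule sum.cong[OF refl])
    fix m assume "m \<in> zfib ` FA"
    have "(\<Sum>q\<in>{q\<in>FA. zfib q = m}. 8 * real (zfib q) powr (-13/6)) =
          (\<Sum>q\<in>{q\<in>FA. zfib q = m}. 8 * real m powr (-13/6))" by (rule sum.cong) auto
    then show "(\<Sum>q\<in>{q\<in>FA. zfib q = m}. 8 * real (zfib q) powr (-13/6)) =
          real (card {q\<in>FA. zfib q = m}) * (8 * real m powr (-13/6))" by simp
  qed
  also have "\<dots> \<le> (\<Sum>m\<in>zfib ` FA. 8 * real m powr (-7/6))"
  proof (rule sum_mono)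
    fix m assume "m \<in> zfib ` FA"
    then obtain q0 where q0: "q0 \<in> FA" "m = zfib q0" by blast
    then have "prime q0" "q0 \<noteq> 2" "q0 \<noteq> 5" using F2q unfolding FA_def by auto
    then have mpos: "m > 0" using zfib_good q0(2) by auto
    have sub: "{q\<in>FA. zfib q = m} \<subseteq> {q. prime q \<and> q \<noteq> 2 \<and> q \<noteq> 5 \<and> zfib q = m}"
      using F2q unfolding FA_def by auto
    from card_zfib_le[OF mpos] have "card {q\<in>FA. zfib q = m} \<le> m"
      using card_mono[OF _ sub] by (meson order_trans)
    then have c: "real (card {q\<in>FA. zfib q = m}) \<le> real m" by simp
    have "real (card {q\<in>FA. zfib q = m}) * (8 * real m powr (-13/6)) \<le> real m * (8 * real m powr (-13/6))"
      by (rule mult_right_mono[OF c]) simp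
    also have "real m * (8 * real m powr (-13/6)) = 8 * (real m powr 1 * real m powr (-13/6))"
      by simp
    also have "real m powr 1 * real m powr (-13/6) = real m powr (-7/6)"
      using powr_add[of "real m" 1 "-13/6"] by (simp del: powr_one')
    finally show "real (card {q\<in>FA. zfib q = m}) * (8 * real m powr (-13/6)) \<le> 8 * real m powr (-7/6)" .
  qed
  also have "\<dots> = 8 * (\<Sum>m\<in>zfib ` FA. real m powr (-7/6))" by (simp add: sum_distrib_left)
  also have "(\<Sum>m\<in>zfib ` FA. real m powr (-7/6)) \<le> (\<Sum>n. real n powr (-7/6))"
    by (rule sum_le_suminf[OF s2]) (use finFA in auto)
  finally have SA: "sum hh FA \<le> 8 * (\<Sum>n. real n powr (-7/6))" by simp
  show ?thesis using S0 S2 SA SB by linarith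
qed

lemma hh_summable: "hh summable_on {q. prime q}"
proof (rule nonneg_bdd_above_summable_on)
  show "\<And>x. x \<in> {q. prime q} \<Longrightarrow> 0 \<le> hh x" by (rule hh_nonneg)
  show "bdd_above (sum hh ` {F. F \<subseteq> {q. prime q} \<and> finite F})"
    by (rule bdd_aboveI[where M = "hh 2 + hh 5 + 8 * (\<Sum>n. real n powr (-13/12)) + 8 * (\<Sum>n. real n powr (-7/6))"])
       (use hh_finite_bound in auto)
qed

theorem lemma2p4:
  shows "\<exists>C::real. C > 0 \<and> (\<forall>y::real. y > 0 \<longrightarrow>
     (\<lambda>q. 1 / real (totient (ellfib q))) summable_on {q::nat. prime q \<and> real q > y} \<and>
     (\<Sum>\<^sub>\<infinity>q\<in>{q::nat. prime q \<and> real q > y}. 1 / real (totient (ellfib q))) \<le> C / y powr (1/4))"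
proof -
  define S where "S = infsum hh {q. prime q}"
  have S0: "S \<ge> 0" unfolding S_def by (rule infsum_nonneg) (rule hh_nonneg)
  show ?thesis
  proof (intro exI[of _ "S + 1"] conjI allI impI)
    show "S + 1 > 0" using S0 by simp
    fix y :: real assume y: "y > 0"
    define P where "P = {q::nat. prime q \<and> real q > y}"
    have PQ: "P \<subseteq> {q. prime q}" unfolding P_def by auto
    have hP: "hh summable_on P" by (rule summable_on_subset[OF hh_summable PQ])
    have fle: "1 / real (totient (ellfib q)) \<le> (1 / y powr (1/4)) * hh q" if "q \<in> P" for q
    proof -
      have qy: "real q > y" using that unfolding P_def by simp
      have yp: "y powr (1/4) > 0" using y by simp
      have "y powr (1/4) \<le> real q powr (1/4)" by (rule powr_mono2) (use y qy in auto)
      then have "y powr (1/4) * (1 / real (totient (ellfib q))) \<le> real q powr (1/4) * (1 / real (totient (ellfib q)))"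
        by (rule mult_right_mono) simp
      then have "y powr (1/4) * (1 / real (totient (ellfib q))) \<le> hh q" unfolding hh_def .
      then show ?thesis using yp by (simp add: field_simps)
    qed
    have cP: "(\<lambda>q. (1 / y powr (1/4)) * hh q) summable_on P" by (rule summable_on_cmult_right[OF hP])
    show "(\<lambda>q. 1 / real (totient (ellfib q))) summable_on {q::nat. prime q \<and> real q > y}"
      unfolding P_def[symmetric]
      by (rule summable_on_comparison_test[OF cP fle]) (simp_all add: zero_le_divide_1_iff)
    then have fP: "(\<lambda>q. 1 / real (totient (ellfib q))) summable_on P" unfolding P_def .
    have "(\<Sum>\<^sub>\<infinity>q\<in>P. 1 / real (totient (ellfib q))) \<le> (\<Sum>\<^sub>\<infinity>q\<in>P. (1 / y powr (1/4)) * hh q)"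
      by (rule infsum_mono[OF fP cP fle])
    also have "\<dots> = (1 / y powr (1/4)) * infsum hh P" by (rule infsum_cmult_right) (use hP in auto)
    also have "infsum hh P \<le> S" unfolding S_def
      by (rule infsum_mono_neutral[OF hP hh_summable]) (use PQ hh_nonneg in auto)
    then have "(1 / y powr (1/4)) * infsum hh P \<le> (1 / y powr (1/4)) * (S + 1)"
      by (intro mult_left_mono) (use y in auto)
    finally show "(\<Sum>\<^sub>\<infinity>q\<in>{q::nat. prime q \<and> real q > y}. 1 / real (totient (ellfib q))) \<le> (S + 1) / y powr (1/4)"
      unfolding P_def by simp
  qed
qed

end
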